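(* Let $(a_n)_{n\in\mathbb Z}$ be a complex sequence with $a_n=0$ for $n<0$ and $a_0=1$, and let $a$ be a nonzero complex number. For integers $k$ and $N\ge 0$ put $v_k(N)=\det\bigl(a_{i+j+k-N}\bigr)_{i,j=0}^{N-1}$. Suppose that $v_2(n)=(-1)^{\binom{n-1}{2}}\,a\,C_{n-1}$ for all $n\ge 1$. Then for all integers $n\ge 0$ and $k\ge 1$, $$v_k(n+k)=(-1)^{\binom{n+1}{2}}\,a^{k-1}\,p_{n+1}(k-1).$$
   Context: $C_n=\frac{1}{n+1}\binom{2n}{n}$ denotes the $n$-th Catalan number. The determinant of a $0\times0$ matrix is $1$. For integers $m,n\ge 0$, $p_m(n)=\prod_{1\le i\le j\le m-1}\frac{2n+i+j}{i+j}$ (empty product $=1$). Note $v_k(N)$ is the determinant of the $N\times N$ Hankel matrix whose first row is $(a_{k-N},a_{k-N+1},\dots,a_{k-1})$. *)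

theory Defs
  imports Complex_Main "Jordan_Normal_Form.Determinant"
begin

definition catalan :: "nat \<Rightarrow> complex" where
  "catalan n = of_nat ((2*n) choose n) / of_nat (n+1)"

definition pprod :: "nat \<Rightarrow> nat \<Rightarrow> complex" where
  "pprod m n = (\<Prod>(i,j)\<in>{(i,j). 1 \<le> i \<and> i \<le> j \<and> j + 1 \<le> m}.
       of_nat (2*n + i + j) / of_nat (i + j))"

definition hankel_v :: "(int \<Rightarrow> complex) \<Rightarrow> int \<Rightarrow> nat \<Rightarrow> complex" where
  "hankel_v a k N = det (mat N N (\<lambda>(i,j). a (int i + int j + k - int N)))"

end

theory Submission
  imports Defs
begin


lemma det_single_col:
  fixes A :: "'a::comm_ring_1 mat"
  assumes A: "A \<in> carrier_mat n n" and i: "i < n" and j: "j < n"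
    and z: "\<And>r. r < n \<Longrightarrow> r \<noteq> i \<Longrightarrow> A $$ (r,j) = 0"
  shows "det A = A $$ (i,j) * cofactor A i j"
proof -
  have "det A = (\<Sum>r<n. A $$ (r,j) * cofactor A r j)" by (rule laplace_expansion_column[OF A j])
  also have "\<dots> = (\<Sum>r<n. if r = i then A $$ (i,j) * cofactor A i j else 0)"
    by (rule sum.cong) (auto simp: z)
  also have "\<dots> = A $$ (i,j) * cofactor A i j" using i by simp
  finally show ?thesis .
qed

lemma det_single_row:
  fixes A :: "'a::comm_ring_1 mat"
  assumes A: "A \<in> carrier_mat n n" and i: "i < n" and j: "j < n"
    and z: "\<And>r. r < n \<Longrightarrow> r \<noteq> j \<Longrightarrow> A $$ (i,r) = 0"
  shows "det A = A $$ (i,j) * cofactor A i j"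
proof -
  have "det A = (\<Sum>r<n. A $$ (i,r) * cofactor A i r)" by (rule laplace_expansion_row[OF A i])
  also have "\<dots> = (\<Sum>r<n. if r = j then A $$ (i,j) * cofactor A i j else 0)"
    by (rule sum.cong) (auto simp: z)
  also have "\<dots> = A $$ (i,j) * cofactor A i j" using j by simp
  finally show ?thesis .
qed

lemma det_zero_col:
  fixes A :: "'a::comm_ring_1 mat"
  assumes A: "A \<in> carrier_mat n n" and j: "j < n"
    and z: "\<And>r. r < n \<Longrightarrow> A $$ (r,j) = 0"
  shows "det A = 0"
proof -
  have "det A = (\<Sum>r<n. A $$ (r,j) * cofactor A r j)" by (rule laplace_expansion_column[OF A j])
  also have "\<dots> = 0" by (auto simp: z)
  finally show ?thesis .
qed

lemma neg1_even: "(-1::'a::comm_ring_1)^(m+m) = 1"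
  by (simp add: neg_one_even_power)

lemma sum_split2:
  fixes f :: "nat \<Rightarrow> 'a::comm_monoid_add"
  shows "(\<Sum>r<n+2. f r) = f (n+1) + f 0 + (\<Sum>r<n. f (Suc r))"
proof -
  have "(\<Sum>r<n+2. f r) = (\<Sum>r<Suc (Suc n). f r)" by simp
  also have "\<dots> = (\<Sum>r<Suc n. f r) + f (Suc n)" by (rule sum.lessThan_Suc)
  also have "(\<Sum>r<Suc n. f r) = f 0 + (\<Sum>r<n. f (Suc r))" by (rule sum.lessThan_Suc_shift)
  finally show ?thesis by (simp add: ac_simps)
qed

lemma DJ:
  fixes M :: "'a::idom mat"
  assumes M: "M \<in> carrier_mat (n+2) (n+2)" and d: "det M \<noteq> 0"
  shows "det M * det (mat n n (\<lambda>(i,j). M $$ (i+1,j+1))) =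
     det (mat_delete M 0 0) * det (mat_delete M (n+1) (n+1))
     - det (mat_delete M 0 (n+1)) * det (mat_delete M (n+1) 0)"
proof -
  define l where "l = n+1"
  define A where "A = adj_mat M"
  have A: "A \<in> carrier_mat (n+2) (n+2)" and MA: "M * A = det M \<cdot>\<^sub>m 1\<^sub>m (n+2)"
    using adj_mat[OF M] unfolding A_def by auto
  have Aij: "A $$ (i,j) = cofactor M j i" if "i < n+2" "j < n+2" for i j
    using that M unfolding A_def adj_mat_def by auto
  define B where "B = mat (n+2) (n+2) (\<lambda>(i,j). if j = 0 then A $$ (i,0) else if j = l then A $$ (i,l)
       else if i = j then 1 else 0)"
  have B: "B \<in> carrier_mat (n+2) (n+2)" unfolding B_def by auto
  define MB where "MB = mat (n+2) (n+2) (\<lambda>(i,j). if j = 0 then (if i = 0 then det M else 0)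
       else if j = l then (if i = l then det M else 0) else M $$ (i,j))"
  have MBeq: "M * B = MB"
  proof (rule eq_matI)
    fix i j assume i: "i < dim_row MB" and j: "j < dim_col MB"
    hence i: "i < n+2" and j: "j < n+2" unfolding MB_def by auto
    have e: "(M * B) $$ (i,j) = (\<Sum>k<n+2. M $$ (i,k) * B $$ (k,j))"
      using M B i j by (auto simp: scalar_prod_def atLeast0LessThan intro!: sum.cong)
    have eA: "(M * A) $$ (i,j) = (\<Sum>k<n+2. M $$ (i,k) * A $$ (k,j))"
      using M A i j by (auto simp: scalar_prod_def atLeast0LessThan intro!: sum.cong)
    show "(M * B) $$ (i,j) = MB $$ (i,j)"
    proof (cases "j = 0 \<or> j = l")
      case True
      have "(M * B) $$ (i,j) = (M * A) $$ (i,j)"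
        unfolding e eA using True by (auto simp: B_def l_def intro!: sum.cong)
      also have "\<dots> = (if i = j then det M else 0)" unfolding MA using i j by auto
      finally show ?thesis using True i j unfolding MB_def l_def by auto
    next
      case False
      have "(M * B) $$ (i,j) = (\<Sum>k<n+2. if k = j then M $$ (i,j) else 0)"
        unfolding e by (rule sum.cong) (use False j in \<open>auto simp: B_def l_def\<close>)
      also have "\<dots> = M $$ (i,j)" using j by simp
      finally show ?thesis using False i j unfolding MB_def l_def by auto
    qed
  qed (insert M B, auto simp: MB_def)
  have MB: "MB \<in> carrier_mat (n+2) (n+2)" unfolding MB_def by auto
  define D1 where "D1 = mat_delete MB 0 0"
  have D1: "D1 \<in> carrier_mat (n+1) (n+1)" unfolding D1_def using MB by (auto simp: mat_delete_def)
  have "det MB = MB $$ (0,0) * cofactor MB 0 0"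
    by (rule det_single_col[OF MB]) (auto simp: MB_def)
  hence dMB1: "det MB = det M * det D1" unfolding cofactor_def D1_def by (simp add: MB_def)
  have "det D1 = D1 $$ (n,n) * cofactor D1 n n"
    by (rule det_single_col[OF D1]) (auto simp: D1_def MB_def mat_delete_def l_def)
  moreover have "mat_delete D1 n n = mat n n (\<lambda>(i,j). M $$ (i+1,j+1))"
    by (rule eq_matI) (auto simp: D1_def MB_def mat_delete_def l_def)
  ultimately have "det D1 = det M * det (mat n n (\<lambda>(i,j). M $$ (i+1,j+1)))"
    unfolding cofactor_def by (simp add: D1_def MB_def mat_delete_def l_def neg1_even)
  with dMB1 have dMB: "det MB = det M * (det M * det (mat n n (\<lambda>(i,j). M $$ (i+1,j+1))))" by simp
  have "det B = (\<Sum>r<n+2. B $$ (r,l) * cofactor B r l)"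
    by (rule laplace_expansion_column[OF B]) (simp add: l_def)
  also have "\<dots> = B $$ (l,l) * cofactor B l l + B $$ (0,l) * cofactor B 0 l
      + (\<Sum>r<n. B $$ (Suc r,l) * cofactor B (Suc r) l)"
    unfolding sum_split2 l_def ..
  also have "(\<Sum>r<n. B $$ (Suc r,l) * cofactor B (Suc r) l) = 0"
  proof (rule sum.neutral, rule ballI)
    fix r assume r: "r \<in> {..<n}"
    have "det (mat_delete B (Suc r) l) = 0"
      by (rule det_zero_col[of _ "n+1" "Suc r"]) (insert r B, auto simp: mat_delete_def B_def l_def)
    thus "B $$ (Suc r,l) * cofactor B (Suc r) l = 0" unfolding cofactor_def by simp
  qed
  also have "cofactor B l l = A $$ (0,0)"
  proof -
    define E where "E = mat_delete B l l"
    have E: "E \<in> carrier_mat (n+1) (n+1)" unfolding E_def using B by (auto simp: mat_delete_def l_def)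
    have "det E = E $$ (0,0) * cofactor E 0 0"
      by (rule det_single_row[OF E]) (auto simp: E_def B_def mat_delete_def l_def)
    moreover have "mat_delete E 0 0 = 1\<^sub>m n"
      by (rule eq_matI) (auto simp: E_def B_def mat_delete_def l_def)
    ultimately have "det E = A $$ (0,0)"
      unfolding cofactor_def by (simp add: E_def B_def mat_delete_def l_def)
    thus ?thesis unfolding cofactor_def E_def by (simp add: neg1_even)
  qed
  also have "cofactor B 0 l = - A $$ (l,0)"
  proof -
    define E where "E = mat_delete B 0 l"
    have E: "E \<in> carrier_mat (n+1) (n+1)" unfolding E_def using B by (auto simp: mat_delete_def l_def)
    have "det E = E $$ (n,0) * cofactor E n 0"
      by (rule det_single_row[OF E]) (auto simp: E_def B_def mat_delete_def l_def)
    moreover have "mat_delete E n 0 = 1\<^sub>m n"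
      by (rule eq_matI) (auto simp: E_def B_def mat_delete_def l_def)
    ultimately have "det E = (-1)^n * A $$ (l,0)"
      unfolding cofactor_def by (simp add: E_def B_def mat_delete_def l_def)
    thus ?thesis unfolding cofactor_def E_def l_def
      by (simp add: neg1_even flip: mult.assoc power_add)
  qed
  finally have dB: "det B = B $$ (l, l) * A $$ (0, 0) + B $$ (0, l) * - A $$ (l, 0)" by simp
  have dB2: "det B = det (mat_delete M 0 0) * det (mat_delete M (n+1) (n+1))
     - det (mat_delete M 0 (n+1)) * det (mat_delete M (n+1) 0)"
    unfolding dB using Aij[of l l] Aij[of 0 0] Aij[of 0 l] Aij[of l 0]
    by (simp add: B_def l_def cofactor_def neg1_even flip: mult.assoc power_add)
  have "det M * det B = det M * (det M * det (mat n n (\<lambda>(i,j). M $$ (i+1,j+1))))"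
    using det_mult[OF M B] unfolding MBeq dMB by (rule sym)
  hence "det B = det M * det (mat n n (\<lambda>(i,j). M $$ (i+1,j+1)))" using d
    by (metis mult_cancel_left)
  with dB2 show ?thesis by simp
qed



definition HM :: "(int \<Rightarrow> complex) \<Rightarrow> int \<Rightarrow> nat \<Rightarrow> complex mat" where
  "HM a k N = mat N N (\<lambda>(i,j). a (int i + int j + k - int N))"

lemma hankel_HM: "hankel_v a k N = det (HM a k N)"
  by (simp add: hankel_v_def HM_def)

lemma HM_carrier: "HM a k N \<in> carrier_mat N N" by (simp add: HM_def)

lemma HM_del00: "mat_delete (HM a k (N+2)) 0 0 = HM a (k+1) (N+1)"
  by (rule eq_matI) (auto simp: HM_def mat_delete_def intro!: arg_cong[where f=a])

lemma HM_delll: "mat_delete (HM a k (N+2)) (N+1) (N+1) = HM a (k-1) (N+1)"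
  by (rule eq_matI) (auto simp: HM_def mat_delete_def intro!: arg_cong[where f=a])

lemma HM_del0l: "mat_delete (HM a k (N+2)) 0 (N+1) = HM a k (N+1)"
  by (rule eq_matI) (auto simp: HM_def mat_delete_def intro!: arg_cong[where f=a])

lemma HM_dell0: "mat_delete (HM a k (N+2)) (N+1) 0 = HM a k (N+1)"
  by (rule eq_matI) (auto simp: HM_def mat_delete_def intro!: arg_cong[where f=a])

lemma HM_inner: "mat N N (\<lambda>(i,j). HM a k (N+2) $$ (i+1,j+1)) = HM a k N"
  by (rule eq_matI) (auto simp: HM_def intro!: arg_cong[where f=a])

lemma DJ_hankel:
  assumes "det (HM a k (N+2)) \<noteq> 0"
  shows "det (HM a k (N+2)) * det (HM a k N) =
    det (HM a (k-1) (N+1)) * det (HM a (k+1) (N+1)) - det (HM a k (N+1))^2"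
  using DJ[OF HM_carrier assms] unfolding HM_inner HM_del00 HM_delll HM_del0l HM_dell0
  by (simp add: power2_eq_square mult.commute)

lemma HM1:
  assumes neg: "\<And>n. n < 0 \<Longrightarrow> a n = 0" and a0: "a 0 = 1"
  shows "det (HM a 1 n) = (-1) ^ (n choose 2)"
proof (induction n)
  case 0
  then show ?case by (simp add: HM_def numeral_2_eq_2)
next
  case (Suc n)
  have "det (HM a 1 (Suc n)) = HM a 1 (Suc n) $$ (n,0) * cofactor (HM a 1 (Suc n)) n 0"
    by (rule det_single_col[OF HM_carrier]) (auto simp: HM_def neg)
  moreover have "mat_delete (HM a 1 (Suc n)) n 0 = HM a 1 n"
    by (rule eq_matI) (auto simp: HM_def mat_delete_def intro!: arg_cong[where f=a])
  ultimately have "det (HM a 1 (Suc n)) = (-1)^n * det (HM a 1 n)"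
    by (simp add: HM_def a0 cofactor_def)
  also have "\<dots> = (-1) ^ (Suc n choose 2)" using Suc
    by (simp add: numeral_2_eq_2 power_add)
  finally show ?case .
qed



definition gr :: "nat \<Rightarrow> nat \<Rightarrow> real" where
  "gr N j = (\<Prod>i\<in>{1..j}. real (2*N+i+j) / real (i+j))"

lemma pprod_Suc: "pprod (Suc m) N = pprod m N * of_real (gr N m)"
proof -
  define f where "f = (\<lambda>(i::nat,j::nat). (of_nat (2*N + i + j) / of_nat (i + j) :: complex))"
  let ?S = "\<lambda>m. {(i::nat,j::nat). 1 \<le> i \<and> i \<le> j \<and> j + 1 \<le> m}"
  have eqS: "?S (Suc m) = ?S m \<union> (\<lambda>i. (i,m)) ` {1..m}" by auto
  have fin: "finite (?S m)"
    by (rule finite_subset[of _ "{..m} \<times> {..m}"]) auto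
  have disj: "?S m \<inter> (\<lambda>i. (i,m)) ` {1..m} = {}" by auto
  have "pprod (Suc m) N = prod f (?S (Suc m))" unfolding pprod_def f_def by simp
  also have "\<dots> = prod f (?S m) * prod f ((\<lambda>i. (i,m)) ` {1..m})"
    unfolding eqS by (rule prod.union_disjoint) (use fin disj in auto)
  also have "prod f ((\<lambda>i. (i,m)) ` {1..m}) = (\<Prod>i\<in>{1..m}. f (i,m))"
    by (subst prod.reindex) (auto simp: inj_on_def)
  also have "\<dots> = of_real (gr N m)" unfolding gr_def f_def by (simp add: of_real_prod)
  finally show ?thesis unfolding pprod_def f_def by simp
qed

definition pr :: "nat \<Rightarrow> nat \<Rightarrow> real" where
  "pr m N = (\<Prod>j<m. gr N j)"

lemma pprod_pr: "pprod m N = of_real (pr m N)"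
proof (induction m)
  case 0
  have "{(i::nat,j::nat). 1 \<le> i \<and> i \<le> j \<and> j + 1 \<le> 0} = {}" by auto
  then show ?case by (simp add: pprod_def pr_def)
next
  case (Suc m)
  then show ?case by (simp add: pprod_Suc pr_def)
qed

lemma fact_prod_shift: "(\<Prod>i\<in>{1..j}. real (b+i)) * fact b = fact (b+j)"
proof (induction j)
  case 0 then show ?case by simp
next
  case (Suc j)
  have "(\<Prod>i\<in>{1..Suc j}. real (b+i)) = (\<Prod>i\<in>{1..j}. real (b+i)) * real (b + Suc j)"
    by (simp add: prod.cl_ivl_Suc)
  hence "(\<Prod>i\<in>{1..Suc j}. real (b+i)) * fact b = ((\<Prod>i\<in>{1..j}. real (b+i)) * fact b) * real (Suc (b+j))"
    by (simp add: ac_simps)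
  also have "\<dots> = fact (b+j) * real (Suc (b + j))" by (simp only: Suc.IH)
  also have "\<dots> = fact (Suc (b+j))" by (simp only: fact_Suc mult.commute)
  finally show ?case by simp
qed

lemma gr_fact: "gr N j = fact (2*N+2*j) * fact j / (fact (2*N+j) * fact (2*j))"
proof -
  have "gr N j = (\<Prod>i\<in>{1..j}. real ((2*N+j)+i)) / (\<Prod>i\<in>{1..j}. real (j+i))"
    by (simp only: gr_def prod_dividef) (simp add: add_ac)
  also have "(\<Prod>i\<in>{1..j}. real ((2*N+j)+i)) = fact (2*N+j+j) / fact (2*N+j)"
    using fact_prod_shift[where j=j and b="2*N+j"] by (simp add: eq_divide_eq)
  also have "(\<Prod>i\<in>{1..j}. real (j+i)) = fact (j+j) / fact j"
    using fact_prod_shift[where j=j and b=j] by (simp add: eq_divide_eq)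
  also have "2*N+j+j = 2*N+2*j" by simp
  also have "j + j = 2*j" by simp
  finally show ?thesis by simp
qed

lemma natfrac:
  fixes A B C D :: nat
  assumes "B \<noteq> 0" "D \<noteq> 0" "A * D = C * B"
  shows "real A / real B = real C / real D"
proof -
  have "real A * real D = real C * real B" by (metis assms(3) of_nat_mult)
  thus ?thesis using assms(1,2) by (simp add: field_simps)
qed

lemma frac_aux1:
  fixes F1 F2 F3 F4 a b c d e f :: real
  assumes "F1 \<noteq> 0" "F2 \<noteq> 0" "F3 \<noteq> 0" "F4 \<noteq> 0" "d \<noteq> 0" "e \<noteq> 0" "f \<noteq> 0"
  shows "(a*(b*F1))*(c*F4)/(d*F2*(e*(f*F3))) = F1*F4/(F2*F3) * ((a*b*c)/(d*e*f))"
  using assms by (simp add: field_simps)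

lemma R1: "gr N (Suc j) = gr N j * (real ((2*N+2*j+2)*(2*N+2*j+1)) / real ((2*N+j+1)*(4*j+2)))"
proof -
  define F1 where "F1 = (fact (2*N+2*j) :: real)"
  define F2 where "F2 = (fact (2*N+j) :: real)"
  define F3 where "F3 = (fact (2*j) :: real)"
  define F4 where "F4 = (fact j :: real)"
  have nz: "F1 \<noteq> 0" "F2 \<noteq> 0" "F3 \<noteq> 0" "F4 \<noteq> 0" unfolding F1_def F2_def F3_def F4_def by auto
  have e1: "2*N+2*Suc j = Suc (Suc (2*N+2*j))" by simp
  have e2: "2*N+Suc j = Suc (2*N+j)" by simp
  have e3: "2*Suc j = Suc (Suc (2*j))" by simp
  have f1: "(fact (2*N+2*Suc j)::real) = real (Suc (Suc (2*N+2*j))) * (real (Suc (2*N+2*j)) * F1)"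
    unfolding e1 F1_def by (simp only: fact_Suc of_nat_fact)
  have f2: "(fact (2*N+Suc j)::real) = real (Suc (2*N+j)) * F2"
    unfolding e2 F2_def by (simp only: fact_Suc of_nat_fact)
  have f3: "(fact (2*Suc j)::real) = real (Suc (Suc (2*j))) * (real (Suc (2*j)) * F3)"
    unfolding e3 F3_def by (simp only: fact_Suc of_nat_fact)
  have f4: "(fact (Suc j)::real) = real (Suc j) * F4"
    unfolding F4_def by (simp only: fact_Suc of_nat_fact)
  have a: "gr N (Suc j) = real (Suc (Suc (2*N+2*j))) * (real (Suc (2*N+2*j)) * F1) * (real (Suc j) * F4)
     / (real (Suc (2*N+j)) * F2 * (real (Suc (Suc (2*j))) * (real (Suc (2*j)) * F3)))"
    unfolding gr_fact f1 f2 f3 f4 ..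
  have b: "gr N j = F1 * F4 / (F2 * F3)" unfolding gr_fact F1_def F2_def F3_def F4_def by simp
  have c: "real (Suc (Suc (2*N+2*j))) * real (Suc (2*N+2*j)) * real (Suc j) /
     (real (Suc (2*N+j)) * real (Suc (Suc (2*j))) * real (Suc (2*j))) =
     real (Suc (Suc (2*N+2*j)) * Suc (2*N+2*j) * Suc j) / real (Suc (2*N+j) * Suc (Suc (2*j)) * Suc (2*j))"
    by (simp only: of_nat_mult)
  have d: "\<dots> = real ((2*N+2*j+2)*(2*N+2*j+1)) / real ((2*N+j+1)*(4*j+2))"
    by (rule natfrac) (auto simp: algebra_simps)
  have e: "gr N (Suc j) = F1*F4/(F2*F3) * (real (Suc (Suc (2*N+2*j))) * real (Suc (2*N+2*j)) * real (Suc j) /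
     (real (Suc (2*N+j)) * real (Suc (Suc (2*j))) * real (Suc (2*j))))"
    unfolding a by (rule frac_aux1[OF nz]; rule of_nat_neq_0)
  show ?thesis unfolding e b c d ..
qed

lemma frac_aux3:
  fixes G x y :: real
  assumes "x \<noteq> 0" "y \<noteq> 0"
  shows "G = G * (x / y) * (y / x)"
  using assms by (simp add: field_simps)

lemma R2: "gr N j = gr (Suc N) j * (real ((2*N+j+2)*(2*N+j+1)) / real ((2*N+2*j+2)*(2*N+2*j+1)))"
proof -
  define F1 where "F1 = (fact (2*N+2*j) :: real)"
  define F2 where "F2 = (fact (2*N+j) :: real)"
  define F3 where "F3 = (fact (2*j) :: real)"
  define F4 where "F4 = (fact j :: real)"
  have nz: "F1 \<noteq> 0" "F2 \<noteq> 0" "F3 \<noteq> 0" "F4 \<noteq> 0" unfolding F1_def F2_def F3_def F4_def by auto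
  have e1: "2*Suc N+2*j = Suc (Suc (2*N+2*j))" by simp
  have e2: "2*Suc N+j = Suc (Suc (2*N+j))" by simp
  have f1: "(fact (2*Suc N+2*j)::real) = real (Suc (Suc (2*N+2*j))) * (real (Suc (2*N+2*j)) * F1)"
    unfolding e1 F1_def by (simp only: fact_Suc of_nat_fact)
  have f2: "(fact (2*Suc N+j)::real) = real (Suc (Suc (2*N+j))) * (real (Suc (2*N+j)) * F2)"
    unfolding e2 F2_def by (simp only: fact_Suc of_nat_fact)
  have a: "gr (Suc N) j = real (Suc (Suc (2*N+2*j))) * (real (Suc (2*N+2*j)) * F1) * F4
     / (real (Suc (Suc (2*N+j))) * (real (Suc (2*N+j)) * F2) * F3)"
    unfolding gr_fact f1 f2 F4_def F3_def by simp
  have a2: "\<dots> = F1 * F4 / (F2 * F3) * (real ((2*N+2*j+2)*(2*N+2*j+1)) / real ((2*N+j+2)*(2*N+j+1)))"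
    using nz by (simp add: field_simps)
  have b: "gr N j = F1 * F4 / (F2 * F3)" unfolding gr_fact F1_def F2_def F3_def F4_def by simp
  show ?thesis unfolding a a2 b
    by (rule frac_aux3) (simp_all only: of_nat_eq_0_iff, simp_all)
qed



definition rho :: "nat \<Rightarrow> nat \<Rightarrow> real" where
  "rho N l = real ((2*N+l+2)*(2*N+l+1)) / real ((2*N+2*l+2)*(2*N+2*l+1))"

definition W :: "nat \<Rightarrow> nat \<Rightarrow> real" where
  "W N n = real ((2*N+n+4)*(2*N+n+3)*(2*N+n+3)*(2*N+n+2)) / real ((2*N+2*n+4)*(2*N+2*n+3)*(2*N+3)*(2*N+2))"

lemma fr_mult: "real a / real b * (real c / real d) = real (a*c) / real (b*d)"
  by simp

lemma pr_Suc: "pr (Suc m) N = pr m N * gr N m"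
  by (simp add: pr_def)

lemma pr_shift: "pr m N = pr m (Suc N) * (\<Prod>l<m. rho N l)"
  unfolding pr_def prod.distrib[symmetric] by (rule prod.cong) (auto simp: R2[of N] rho_def)

lemma W_step: "W N n * rho (Suc N) (Suc n) = rho N (Suc n) * W N (Suc n)"
proof -
  have e: "2*Suc N+Suc n+2 = 2*N+n+5" "2*Suc N+Suc n+1 = 2*N+n+4"
    "2*Suc N+2*Suc n+2 = 2*N+2*n+6" "2*Suc N+2*Suc n+1 = 2*N+2*n+5"
    "2*N+Suc n+1 = 2*N+n+2" "2*N+Suc n+2 = 2*N+n+3" "2*N+Suc n+3 = 2*N+n+4" "2*N+Suc n+4 = 2*N+n+5"
    "2*N+2*Suc n+1 = 2*N+2*n+3" "2*N+2*Suc n+2 = 2*N+2*n+4" "2*N+2*Suc n+3 = 2*N+2*n+5" "2*N+2*Suc n+4 = 2*N+2*n+6"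
    by simp_all
  show ?thesis unfolding rho_def W_def fr_mult e
    by (rule natfrac) (simp_all only: mult_ac, simp_all)
qed

lemma Rratio: "(\<Prod>l<Suc n. rho (Suc N) l) = (\<Prod>l<Suc n. rho N l) * W N n"
proof (induction n)
  case 0
  have e: "2*Suc N+0+2 = 2*N+4" "2*Suc N+0+1 = 2*N+3" "2*Suc N+2*0+2 = 2*N+4" "2*Suc N+2*0+1 = 2*N+3"
    "2*N+0+1 = 2*N+1" "2*N+0+2 = 2*N+2" "2*N+0+3 = 2*N+3" "2*N+0+4 = 2*N+4"
    "2*N+2*0+1 = 2*N+1" "2*N+2*0+2 = 2*N+2" "2*N+2*0+3 = 2*N+3" "2*N+2*0+4 = 2*N+4"
    by simp_all
  have "rho (Suc N) 0 = rho N 0 * W N 0"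
    unfolding rho_def W_def fr_mult e by (rule natfrac) (simp_all only: mult_ac, simp_all)
  then show ?case by simp
next
  case (Suc n)
  have "(\<Prod>l<Suc (Suc n). rho (Suc N) l) = (\<Prod>l<Suc n. rho (Suc N) l) * rho (Suc N) (Suc n)"
    by simp
  also have "\<dots> = (\<Prod>l<Suc n. rho N l) * (W N n * rho (Suc N) (Suc n))" using Suc by simp
  also have "\<dots> = (\<Prod>l<Suc n. rho N l) * rho N (Suc n) * W N (Suc n)" unfolding W_step by simp
  finally show ?case by simp
qed

definition sig :: "nat \<Rightarrow> nat \<Rightarrow> real" where
  "sig j n = real ((2*Suc j+2*Suc n+2)*(2*Suc j+2*Suc n+1)) / real ((2*Suc j+Suc n+1)*(4*Suc n+2))"

lemma minus_one_frac: "(y::real) \<noteq> 0 \<Longrightarrow> x = y + z \<Longrightarrow> x / y - 1 = z / y"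
  by (simp add: field_simps)

lemma sig_minus: "sig j n - 1 = real ((2*j+2)*(2*j+3)) / real ((2*Suc j+Suc n+1)*(4*Suc n+2))"
  unfolding sig_def
proof (rule minus_one_frac)
  show "real ((2*Suc j+Suc n+1)*(4*Suc n+2)) \<noteq> 0" by (simp only: of_nat_eq_0_iff) simp
  have "(2*Suc j+2*Suc n+2)*(2*Suc j+2*Suc n+1) = (2*Suc j+Suc n+1)*(4*Suc n+2) + (2*j+2)*(2*j+3)"
    by (simp add: algebra_simps)
  thus "real ((2*Suc j+2*Suc n+2)*(2*Suc j+2*Suc n+1)) = real ((2*Suc j+Suc n+1)*(4*Suc n+2)) + real ((2*j+2)*(2*j+3))"
    by (metis of_nat_add)
qed

lemma Kid: "W j n * (sig j n - 1) = rho j (Suc n) * rho j (Suc (Suc n)) * sig j n"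
proof -
  have e: "2*Suc j+Suc n+1 = 2*j+n+4" "4*Suc n+2 = 4*n+6" "2*j+Suc n+2 = 2*j+n+3" "2*j+Suc n+1 = 2*j+n+2"
    "2*j+2*Suc n+2 = 2*j+2*n+4" "2*j+2*Suc n+1 = 2*j+2*n+3" "2*j+Suc (Suc n)+2 = 2*j+n+4"
    "2*j+Suc (Suc n)+1 = 2*j+n+3" "2*j+2*Suc (Suc n)+2 = 2*j+2*n+6" "2*j+2*Suc (Suc n)+1 = 2*j+2*n+5"
    "2*Suc j+2*Suc n+2 = 2*j+2*n+6" "2*Suc j+2*Suc n+1 = 2*j+2*n+5"
    by simp_all
  show ?thesis unfolding sig_minus unfolding sig_def rho_def W_def fr_mult e
    by (rule natfrac) (simp_all only: mult_ac, simp_all)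
qed

lemma abstract_alg:
  fixes Z R1 Rj Wv G1 s r1 r2 :: real
  assumes "R1 = Rj*Wv" "Wv*(s-1) = r1*r2*s"
  shows "(Z*R1*G1*(G1*s)) * (Z*R1) = Z * (Z*R1*Rj*(G1*r1)*(G1*s*r2)) + (Z*R1*G1)^2"
proof -
  have "(Z*R1*G1*(G1*s)) * (Z*R1) - (Z * (Z*R1*Rj*(G1*r1)*(G1*s*r2)) + (Z*R1*G1)^2)
     = Z*Z*R1*G1*G1*Rj*(Wv*(s-1) - r1*r2*s)"
    unfolding assms(1) by (simp add: algebra_simps power2_eq_square)
  also have "\<dots> = 0" using assms(2) by simp
  finally show ?thesis by simp
qed

lemma pid: "pr (n+3) (j+1) * pr (n+1) (j+1) = pr (n+1) (j+2) * pr (n+3) j + pr (n+2) (j+1)^2"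
proof -
  define Z where "Z = pr (n+1) (j+2)"
  define R1 where "R1 = (\<Prod>l<Suc n. rho (Suc j) l)"
  define Rj where "Rj = (\<Prod>l<Suc n. rho j l)"
  define G1 where "G1 = gr (Suc j) (Suc n)"
  have a1: "pr (n+1) (j+1) = Z * R1" unfolding Z_def R1_def using pr_shift[of "Suc n" "Suc j"] by simp
  have a2: "pr (n+1) j = Z * R1 * Rj" unfolding Rj_def a1[symmetric] using pr_shift[of "Suc n" j] by simp
  have a3: "R1 = Rj * W j n" unfolding R1_def Rj_def by (rule Rratio)
  have a4: "pr (n+2) (j+1) = Z * R1 * G1" unfolding G1_def a1[symmetric]
    by (simp add: pr_Suc numeral_2_eq_2)
  have a5: "pr (n+3) (j+1) = Z * R1 * G1 * (G1 * sig j n)"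
  proof -
    have "pr (n+3) (j+1) = pr (n+2) (j+1) * gr (Suc j) (Suc (Suc n))"
      by (simp add: pr_Suc numeral_3_eq_3 numeral_2_eq_2)
    also have "gr (Suc j) (Suc (Suc n)) = G1 * sig j n" unfolding G1_def sig_def by (rule R1)
    finally show ?thesis unfolding a4 .
  qed
  have a6: "pr (n+3) j = Z * R1 * Rj * (G1 * rho j (Suc n)) * (G1 * sig j n * rho j (Suc (Suc n)))"
  proof -
    have "pr (n+3) j = pr (n+1) j * gr j (Suc n) * gr j (Suc (Suc n))"
      by (simp add: pr_Suc numeral_3_eq_3)
    also have "gr j (Suc n) = G1 * rho j (Suc n)" unfolding G1_def rho_def by (rule R2)
    also have "gr j (Suc (Suc n)) = gr (Suc j) (Suc (Suc n)) * rho j (Suc (Suc n))"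
      unfolding rho_def by (rule R2)
    also have "gr (Suc j) (Suc (Suc n)) = G1 * sig j n" unfolding G1_def sig_def by (rule R1)
    finally show ?thesis unfolding a2 .
  qed
  show ?thesis unfolding a1 a4 a5 a6 Z_def[symmetric]
    by (rule abstract_alg[OF a3 Kid])
qed



lemma pr_0: "pr m 0 = 1"
proof -
  have "gr 0 j = 1" for j
    unfolding gr_def by (rule prod.neutral) auto
  thus ?thesis unfolding pr_def by simp
qed

lemma gr_pos: "gr N j > 0" unfolding gr_fact by simp

lemma pr_pos: "pr m N > 0" unfolding pr_def by (rule prod_pos) (simp add: gr_pos)

lemma gr1: "gr 1 m = real (4*m+2) / real (m+2)"
proof (induction m)
  case 0 then show ?case by (simp add: gr_def)
next
  case (Suc m)
  have "gr 1 (Suc m) = real (4*m+2) / real (m+2) * (real ((2*1+2*m+2)*(2*1+2*m+1)) / real ((2*1+m+1)*(4*m+2)))"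
    using R1[of 1 m] Suc by simp
  also have "\<dots> = real (4*Suc m+2) / real (Suc m+2)"
    unfolding fr_mult by (rule natfrac) (auto simp: algebra_simps)
  finally show ?case .
qed

lemma binom_step: "Suc m * (2*Suc m choose Suc m) = (4*m+2) * (2*m choose m)"
proof -
  have a: "Suc m * (Suc (Suc (2*m)) choose Suc m) = Suc (Suc (2*m)) * (Suc (2*m) choose m)"
    by (rule Suc_times_binomial)
  have b: "Suc m * (Suc (2*m) choose Suc m) = Suc (2*m) * (2*m choose m)"
    by (rule Suc_times_binomial)
  have c: "(Suc (2*m) choose m) = (Suc (2*m) choose Suc m)"
    using binomial_symmetric[of m "Suc (2*m)"] by (simp add: Suc_diff_le)
  have d: "2*Suc m = Suc (Suc (2*m))" by simp
  have "Suc m * (Suc (Suc (2*m)) choose Suc m) = 2 * (Suc m * (Suc (2*m) choose Suc m))"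
    unfolding a c by simp
  also have "\<dots> = (4*m+2) * (2*m choose m)" unfolding b by simp
  finally show ?thesis unfolding d .
qed

lemma catalan_pr: "catalan m = of_real (pr m 1)"
proof -
  have "real (2*m choose m) / real (m+1) = pr m 1"
  proof (induction m)
    case 0 then show ?case by (simp add: pr_def)
  next
    case (Suc m)
    have "pr (Suc m) 1 = pr m 1 * gr 1 m" by (rule pr_Suc)
    also have "\<dots> = real (2*m choose m) / real (m+1) * (real (4*m+2) / real (m+2))"
      unfolding gr1 Suc.IH ..
    also have "\<dots> = real (2*Suc m choose Suc m) / real (Suc m+1)"
    proof (unfold fr_mult, rule natfrac)
      have "(2*Suc m choose Suc m)*((m+1)*(m+2)) = (Suc m * (2*Suc m choose Suc m))*(m+2)"
        by (metis mult.assoc mult.commute Suc_eq_plus1)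
      also have "\<dots> = (2*m choose m)*(4*m+2)*(Suc m+1)" unfolding binom_step
        by (metis mult.commute add_2_eq_Suc' Suc_eq_plus1)
      finally show "(2*m choose m)*(4*m+2)*(Suc m+1) = (2*Suc m choose Suc m)*((m+1)*(m+2))" by simp
    qed simp_all
    finally show ?case by simp
  qed
  thus ?thesis unfolding catalan_def by (metis of_real_divide of_real_of_nat_eq)
qed

lemma choose2_SS: "(Suc (Suc m) choose 2) = (m choose 2) + m + Suc m"
  by (simp add: numeral_2_eq_2)

lemma sign_lemma: "(-1::complex) ^ ((n+1) choose 2) * (-1) ^ ((n+3) choose 2) = -1"
proof -
  have e: "(n+3) choose 2 = ((n+1) choose 2) + (2*n+3)"
  proof -
    have "(n+3) choose 2 = Suc (Suc (n+1)) choose 2" by (simp add: numeral_3_eq_3)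
    also have "\<dots> = ((n+1) choose 2) + (2*n+3)" unfolding choose2_SS by simp
    finally show ?thesis .
  qed
  have "(-1::complex) ^ ((n+1) choose 2) * (-1) ^ ((n+3) choose 2)
     = (-1) ^ (((n+1) choose 2) + ((n+1) choose 2)) * (-1) ^ (2*n+3)"
    unfolding e by (simp only: power_add mult.assoc)
  also have "\<dots> = -1" by (simp add: neg1_even)
  finally show ?thesis .
qed

lemma sign_sq: "((-1::complex) ^ m)^2 = 1"
  by (simp add: power2_eq_square flip: power_add add: neg1_even)

lemma alg_final:
  fixes sn sn1 sn2 cK c pa pb pc pd pe :: complex
  assumes "sn * sn2 = -1" "sn1^2 = 1" "pb * pc = pa * pd + pe^2"
  shows "(sn2*cK*pd)*(sn*(cK*c*c)*pa) = (sn2*(cK*c)*pb)*(sn*(cK*c)*pc) + (sn1*(cK*c)*pe)^2"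
proof -
  have "(sn2*cK*pd)*(sn*(cK*c*c)*pa) - ((sn2*(cK*c)*pb)*(sn*(cK*c)*pc) + (sn1*(cK*c)*pe)^2)
     = (sn*sn2)*cK*cK*c*c*(pa*pd - pb*pc) - sn1^2 * cK*cK*c*c*pe^2"
    by (simp add: algebra_simps power2_eq_square)
  also have "\<dots> = 0" unfolding assms by (simp add: algebra_simps power2_eq_square)
  finally show ?thesis by simp
qed



theorem lemma5:
  fixes a :: "int \<Rightarrow> complex" and c :: complex
  assumes neg: "\<And>n. n < 0 \<Longrightarrow> a n = 0"
    and a0: "a 0 = 1"
    and c_nz: "c \<noteq> 0"
    and hv2: "\<And>n::nat. n \<ge> 1 \<Longrightarrow>
               hankel_v a 2 n = (-1) ^ ((n - 1) choose 2) * c * catalan (n - 1)"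
  shows "\<And>(n::nat) (k::nat). k \<ge> 1 \<Longrightarrow>
           hankel_v a (int k) (n + k) = (-1) ^ ((n + 1) choose 2) * c ^ (k - 1) * pprod (n + 1) (k - 1)"
proof -
  define f where "f = (\<lambda>n k. (-1::complex) ^ ((n + 1) choose 2) * c ^ (k - 1) * pprod (n + 1) (k - 1))"
  have fnz: "f n k \<noteq> 0" for n k
    unfolding f_def pprod_pr using c_nz pr_pos[of "n+1" "k-1"] by simp
  have claim: "\<forall>n. det (HM a (int (K+1)) (n+(K+1))) = f n (K+1) \<and> det (HM a (int (K+2)) (n+(K+2))) = f n (K+2)" for K
  proof (induction K)
    case 0
    show ?case
    proof
      fix n
      have "det (HM a (int (0+1)) (n+(0+1))) = (-1) ^ ((n+1) choose 2)"
        using HM1[where a=a and n="n+1", OF neg a0] by simp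
      also have "\<dots> = f n (0+1)" unfolding f_def pprod_pr by (simp add: pr_0)
      finally have A: "det (HM a (int (0+1)) (n+(0+1))) = f n (0+1)" .
      have "det (HM a (int (0+2)) (n+(0+2))) = hankel_v a 2 (n+2)" unfolding hankel_HM by simp
      also have "\<dots> = (-1) ^ ((n+1) choose 2) * c * catalan (n+1)" using hv2[of "n+2"] by simp
      also have "\<dots> = f n (0+2)" unfolding f_def catalan_pr pprod_pr by simp
      finally show "det (HM a (int (0+1)) (n+(0+1))) = f n (0+1) \<and> det (HM a (int (0+2)) (n+(0+2))) = f n (0+2)"
        using A by simp
    qed
  next
    case (Suc K)
    show ?case
    proof
      fix n
      have h1: "det (HM a (int (K+2)) ((n+2)+(K+2))) = f (n+2) (K+2)" using Suc by blast
      have h2: "det (HM a (int (K+2)) (n+(K+2))) = f n (K+2)" using Suc by blast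
      have h3: "det (HM a (int (K+2)) ((n+1)+(K+2))) = f (n+1) (K+2)" using Suc by blast
      have h4: "det (HM a (int (K+1)) ((n+2)+(K+1))) = f (n+2) (K+1)" using Suc by blast
      have dj: "det (HM a (int (K+2)) ((n+K+2)+2)) * det (HM a (int (K+2)) (n+K+2)) =
        det (HM a (int (K+2) - 1) ((n+K+2)+1)) * det (HM a (int (K+2) + 1) ((n+K+2)+1))
        - det (HM a (int (K+2)) ((n+K+2)+1))^2"
        by (rule DJ_hankel) (metis h1 fnz add.commute add.left_commute add.assoc)
      have q1: "HM a (int (K+2)) ((n+K+2)+2) = HM a (int (K+2)) ((n+2)+(K+2))"
        by (rule arg_cong[where f="HM a (int (K+2))"]) simp
      have q2: "HM a (int (K+2)) (n+K+2) = HM a (int (K+2)) (n+(K+2))"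
        by (rule arg_cong[where f="HM a (int (K+2))"]) simp
      have i3: "int (K+2) - 1 = int (K+1)" "n+K+2+1 = (n+2)+(K+1)" by simp_all
      have q3: "HM a (int (K+2) - 1) ((n+K+2)+1) = HM a (int (K+1)) ((n+2)+(K+1))"
        unfolding i3 ..
      have i4: "int (K+2) + 1 = int (Suc K + 2)" "n+K+2+1 = n+(Suc K+2)" by simp_all
      have q4: "HM a (int (K+2) + 1) ((n+K+2)+1) = HM a (int (Suc K + 2)) (n + (Suc K + 2))"
        unfolding i4 ..
      have q5: "HM a (int (K+2)) ((n+K+2)+1) = HM a (int (K+2)) ((n+1)+(K+2))"
        by (rule arg_cong[where f="HM a (int (K+2))"]) simp
      define X where "X = det (HM a (int (Suc K + 2)) (n + (Suc K + 2)))"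
      have dj2: "f (n+2) (K+2) * f n (K+2) = f (n+2) (K+1) * X - f (n+1) (K+2)^2"
        using dj unfolding q1 q2 q3 q4 q5 h1 h2 h3 h4 X_def[symmetric] .
      have alg: "f (n+2) (K+1) * f n (Suc K+2) = f (n+2) (K+2) * f n (K+2) + f (n+1) (K+2)^2"
      proof -
        have p: "pprod (n+3) (K+1) * pprod (n+1) (K+1) = pprod (n+1) (K+2) * pprod (n+3) K + pprod (n+2) (K+1)^2"
          unfolding pprod_pr using arg_cong[OF pid[of n K], of complex_of_real] by simp
        have s1: "(-1::complex) ^ ((n+1) choose 2) * (-1) ^ ((n+2+1) choose 2) = -1"
          using sign_lemma[of n] by (simp add: numeral_3_eq_3)
        have "f (n+2) (K+1) * f n (Suc K+2) =
          ((-1) ^ ((n+2+1) choose 2) * c^K * pprod (n+3) K) * ((-1) ^ ((n+1) choose 2) * (c^K*c*c) * pprod (n+1) (K+2))"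
          unfolding f_def by (simp add: numeral_3_eq_3 numeral_2_eq_2 ac_simps)
        also have "\<dots> = ((-1) ^ ((n+2+1) choose 2) * (c^K*c) * pprod (n+3) (K+1)) * ((-1) ^ ((n+1) choose 2) * (c^K*c) * pprod (n+1) (K+1))
          + ((-1) ^ ((n+1+1) choose 2) * (c^K*c) * pprod (n+2) (K+1))^2"
          by (rule alg_final[OF _ sign_sq p]) (use s1 in \<open>simp add: ac_simps\<close>)
        also have "\<dots> = f (n+2) (K+2) * f n (K+2) + f (n+1) (K+2)^2"
          unfolding f_def by (simp add: numeral_3_eq_3 numeral_2_eq_2 ac_simps)
        finally show ?thesis .
      qed
      have "f (n+2) (K+1) * X = f (n+2) (K+2) * f n (K+2) + f (n+1) (K+2)^2"
        using dj2 by (metis eq_diff_eq add.commute)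
      also have "\<dots> = f (n+2) (K+1) * f n (Suc K+2)" using alg by simp
      finally have "X = f n (Suc K+2)" using fnz[of "n+2" "K+1"] by (metis mult_cancel_left)
      moreover have "det (HM a (int (Suc K+1)) (n+(Suc K+1))) = f n (Suc K+1)"
        using h2 by simp
      ultimately show "det (HM a (int (Suc K+1)) (n+(Suc K+1))) = f n (Suc K+1) \<and>
         det (HM a (int (Suc K+2)) (n+(Suc K+2))) = f n (Suc K+2)" unfolding X_def by simp
    qed
  qed
  fix n k :: nat
  assume k: "k \<ge> 1"
  then obtain K where K: "k = K+1" by (metis le_add_diff_inverse2)
  show "hankel_v a (int k) (n + k) = (-1) ^ ((n + 1) choose 2) * c ^ (k - 1) * pprod (n + 1) (k - 1)"
    using claim[of K] unfolding hankel_HM K f_def by blast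
qed

end
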